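(* Let $X$ be a univariate $L^2$-continuous stochastic process on a compact interval $\mathcal{T}$ with mean $\mu$ and covariance kernel $\kappa$, and let $(\lambda_i,\xi_i)$, $i=1,\dots,m$, be the $m$ largest eigenpairs of the integral operator with kernel $\kappa$, with $\lambda_m>0$. Let $\mathcal{T}=\mathcal{T}_1\cup\dots\cup\mathcal{T}_d$ with pairwise disjoint $\mathcal{T}_a$, $D=\{1,\dots,d\}$. For $R\subseteq D$ let $\hat X^R(t)=X(t)$ if $t\in\bigcup_{b\in R}\mathcal{T}_b$ and $\hat X^R(t)=\mu(t)$ otherwise, and for $a\in D$, $R\subseteq D\setminus\{a\}$, let $\Delta_{\mathcal{T}_a}\mathrm{fmd}^2(\hat X^R,\mu;\kappa,m)=\mathrm{fmd}^2(\hat X^{R\cup\{a\}},\mu;\kappa,m)-\mathrm{fmd}^2(\hat X^R,\mu;\kappa,m)$. Then $$\theta_{\mathcal{T}_a}(X,\mu;\kappa,m):=\sum_{R\subseteq D\setminus\{a\}}\frac{|R|!(d-|R|-1)!}{d!}\Delta_{\mathcal{T}_a}\mathrm{fmd}^2(\hat X^R,\mu;\kappa,m)=\sum_{i=1}^m\frac{1}{\lambda_i}\langle X-\mu,\xi_i\rangle_{\mathcal{T}_a}\langle X-\mu,\xi_i\rangle.$$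
   Context: $\langle f,g\rangle=\int_{\mathcal{T}}f(t)g(t)dt$ and $\langle f,g\rangle_{\mathcal{T}_a}=\int_{\mathcal{T}_a}f(t)g(t)dt$. The squared truncated functional Mahalanobis distance is $\mathrm{fmd}^2(Y,\mu;\kappa,m)=\sum_{i=1}^m\lambda_i^{-1}\langle Y-\mu,\xi_i\rangle^2$. *)

theory Defs
  imports "HOL-Probability.Probability"
begin

definition ip :: "real set \<Rightarrow> (real \<Rightarrow> real) \<Rightarrow> (real \<Rightarrow> real) \<Rightarrow> real" where
  "ip S f g = (LINT t:S|lborel. f t * g t)"

definition fmd2 :: "real set \<Rightarrow> (nat \<Rightarrow> real) \<Rightarrow> (nat \<Rightarrow> real \<Rightarrow> real) \<Rightarrow> nat
    \<Rightarrow> (real \<Rightarrow> real) \<Rightarrow> (real \<Rightarrow> real) \<Rightarrow> real" where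
  "fmd2 T lam xi m Y mu = (\<Sum>i\<in>{1..m}. (1 / lam i) * (ip T (\<lambda>t. Y t - mu t) (xi i))^2)"

definition Xhat :: "(nat \<Rightarrow> real set) \<Rightarrow> nat set \<Rightarrow> (real \<Rightarrow> real) \<Rightarrow> (real \<Rightarrow> real) \<Rightarrow> real \<Rightarrow> real" where
  "Xhat Tp R Y mu t = (if t \<in> (\<Union>b\<in>R. Tp b) then Y t else mu t)"

definition theta :: "real set \<Rightarrow> (nat \<Rightarrow> real set) \<Rightarrow> nat \<Rightarrow> nat \<Rightarrow> (nat \<Rightarrow> real)
    \<Rightarrow> (nat \<Rightarrow> real \<Rightarrow> real) \<Rightarrow> nat \<Rightarrow> (real \<Rightarrow> real) \<Rightarrow> (real \<Rightarrow> real) \<Rightarrow> real" where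
  "theta T Tp d a lam xi m Y mu =
     (\<Sum>R\<in>Pow ({1..d} - {a}).
        (real (fact (card R) * fact (d - card R - 1)) / real (fact d)) *
        (fmd2 T lam xi m (Xhat Tp (insert a R) Y mu) mu - fmd2 T lam xi m (Xhat Tp R Y mu) mu))"

end

theory Submission
  imports Defs
begin


lemma mu_sq_le:
  fixes M :: "'w measure" and X :: "'w \<Rightarrow> real \<Rightarrow> real"
  assumes prob: "prob_space M"
    and rvs: "(\<lambda>w. X w s) \<in> borel_measurable M" and rvt: "(\<lambda>w. X w t) \<in> borel_measurable M"
    and sqs: "integrable M (\<lambda>w. (X w s)^2)" and sqt: "integrable M (\<lambda>w. (X w t)^2)"
  shows "(integral\<^sup>L M (\<lambda>w. X w s) - integral\<^sup>L M (\<lambda>w. X w t))^2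
          \<le> integral\<^sup>L M (\<lambda>w. (X w s - X w t)^2)"
proof -
  interpret prob_space M by (rule prob)
  have ixs: "integrable M (\<lambda>w. X w s)"
    by (rule square_integrable_imp_integrable[OF rvs sqs])
  have it: "integrable M (\<lambda>w. X w t)"
    by (rule square_integrable_imp_integrable[OF rvt sqt])
  have iz2: "integrable M (\<lambda>w. (X w s - X w t)^2)"
  proof (rule Bochner_Integration.integrable_bound[of _ "\<lambda>w. 2 * (X w s)^2 + 2 * (X w t)^2"])
    show "integrable M (\<lambda>w. 2 * (X w s)^2 + 2 * (X w t)^2)" using sqs sqt by simp
    show "(\<lambda>w. (X w s - X w t)^2) \<in> borel_measurable M" using rvs rvt by measurable
    show "AE w in M. norm ((X w s - X w t)^2) \<le> norm (2 * (X w s)^2 + 2 * (X w t)^2)"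
    proof (intro AE_I2)
      fix w
      have "0 \<le> (X w s + X w t)^2" by simp
      then have "(X w s - X w t)^2 \<le> 2 * (X w s)^2 + 2 * (X w t)^2"
        by (simp add: power2_eq_square algebra_simps)
      then show "norm ((X w s - X w t)^2) \<le> norm (2 * (X w s)^2 + 2 * (X w t)^2)"
        by simp
    qed
  qed
  have iz: "integrable M (\<lambda>w. X w s - X w t)" using ixs it by simp
  have "0 \<le> variance (\<lambda>w. X w s - X w t)" by (rule variance_positive)
  also have "\<dots> = expectation (\<lambda>w. (X w s - X w t)^2) - (expectation (\<lambda>w. X w s - X w t))^2"
    by (rule variance_eq[OF iz iz2])
  finally show ?thesis using ixs it by simp
qed

lemma mu_cont:
  fixes M :: "'w measure" and X :: "'w \<Rightarrow> real \<Rightarrow> real"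
  assumes prob: "prob_space M"
    and rv: "\<forall>t\<in>{lo..hi}. (\<lambda>w. X w t) \<in> borel_measurable M"
    and second_moment: "\<forall>t\<in>{lo..hi}. integrable M (\<lambda>w. (X w t)^2)"
    and L2_cont: "\<forall>t\<in>{lo..hi}.
        ((\<lambda>s. integral\<^sup>L M (\<lambda>w. (X w s - X w t)^2)) \<longlongrightarrow> 0) (at t within {lo..hi})"
    and mean: "\<forall>t\<in>{lo..hi}. mu t = integral\<^sup>L M (\<lambda>w. X w t)"
  shows "continuous_on {lo..hi} mu"
  unfolding continuous_on_def
proof (intro ballI)
  fix t assume t: "t \<in> {lo..hi}"
  have ev: "eventually (\<lambda>s. s \<in> {lo..hi}) (at t within {lo..hi})"
    by (simp add: eventually_at_filter)
  have "((\<lambda>s. (mu s - mu t)^2) \<longlongrightarrow> 0) (at t within {lo..hi})"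
  proof (rule tendsto_sandwich[OF _ _ tendsto_const L2_cont[rule_format, OF t]])
    show "eventually (\<lambda>s. 0 \<le> (mu s - mu t)^2) (at t within {lo..hi})" by simp
    show "eventually (\<lambda>s. (mu s - mu t)^2 \<le> integral\<^sup>L M (\<lambda>w. (X w s - X w t)^2)) (at t within {lo..hi})"
      using ev
    proof (rule eventually_mono)
      fix s assume s: "s \<in> {lo..hi}"
      show "(mu s - mu t)^2 \<le> integral\<^sup>L M (\<lambda>w. (X w s - X w t)^2)"
        using mu_sq_le[OF prob rv[rule_format, OF s] rv[rule_format, OF t]
            second_moment[rule_format, OF s] second_moment[rule_format, OF t]]
          mean s t by simp
    qed
  qed
  then have "((\<lambda>s. mu s - mu t) \<longlongrightarrow> 0) (at t within {lo..hi})"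
    by (simp add: power_tendsto_0_iff)
  then show "(mu \<longlongrightarrow> mu t) (at t within {lo..hi})"
    by (simp add: Lim_null[symmetric])
qed



lemma L2_prod:
  fixes f g :: "real \<Rightarrow> real"
  assumes f2: "set_integrable lborel S (\<lambda>t. (f t)^2)" and g2: "set_integrable lborel S (\<lambda>t. (g t)^2)"
    and fm: "set_borel_measurable lborel S f" and gm: "set_borel_measurable lborel S g"
  shows "set_integrable lborel S (\<lambda>t. f t * g t)"
proof (rule set_integrable_bound[of _ _ "\<lambda>t. (f t)^2 + (g t)^2"])
  show "set_integrable lborel S (\<lambda>t. (f t)^2 + (g t)^2)" using f2 g2 by (rule set_integral_add)
  have "(\<lambda>x. (indicator S x *\<^sub>R f x) * (indicator S x *\<^sub>R g x)) \<in> borel_measurable lborel"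
    using fm gm unfolding set_borel_measurable_def by measurable
  moreover have "(\<lambda>x. (indicator S x *\<^sub>R f x) * (indicator S x *\<^sub>R g x)) = (\<lambda>x. indicator S x *\<^sub>R (f x * g x))"
    by (auto simp: indicator_def)
  ultimately show "set_borel_measurable lborel S (\<lambda>t. f t * g t)"
    unfolding set_borel_measurable_def by simp
  show "AE x in lborel. x \<in> S \<longrightarrow> norm (f x * g x) \<le> norm ((f x)^2 + (g x)^2)"
  proof (intro AE_I2 impI)
    fix x
    have "0 \<le> (\<bar>f x\<bar> - \<bar>g x\<bar>)^2" by simp
    then have "\<bar>f x\<bar> * (\<bar>g x\<bar> * 2) \<le> f x * f x + g x * g x"
      by (simp add: power2_eq_square algebra_simps abs_mult)
    moreover have "0 \<le> \<bar>f x\<bar> * \<bar>g x\<bar>" by simp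
    ultimately have "\<bar>f x\<bar> * \<bar>g x\<bar> \<le> f x * f x + g x * g x"
    proof -
      assume a1: "\<bar>f x\<bar> * (\<bar>g x\<bar> * 2) \<le> f x * f x + g x * g x" and a2: "0 \<le> \<bar>f x\<bar> * \<bar>g x\<bar>"
      have "\<bar>f x\<bar> * (\<bar>g x\<bar> * 2) = 2 * (\<bar>f x\<bar> * \<bar>g x\<bar>)" by simp
      then show ?thesis using a1 a2 by linarith
    qed
    then have "\<bar>f x * g x\<bar> \<le> (f x)^2 + (g x)^2"
      by (simp add: power2_eq_square abs_mult)
    then show "norm (f x * g x) \<le> norm ((f x)^2 + (g x)^2)" by simp
  qed
qed

lemma sum_Pow_card:
  fixes g :: "nat \<Rightarrow> real"
  assumes "finite A"
  shows "(\<Sum>R\<in>Pow A. g (card R)) = (\<Sum>k\<in>{0..card A}. real (card A choose k) * g k)"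
proof -
  have "(\<Sum>R\<in>Pow A. g (card R)) = (\<Sum>k\<in>{0..card A}. \<Sum>R\<in>{R\<in>Pow A. card R = k}. g (card R))"
    using assms by (intro sum.group[symmetric]) (auto intro: card_mono)
  also have "\<dots> = (\<Sum>k\<in>{0..card A}. real (card A choose k) * g k)"
  proof (rule sum.cong[OF refl])
    fix k
    have "{R\<in>Pow A. card R = k} = {B. B \<subseteq> A \<and> card B = k}" by auto
    then show "(\<Sum>R\<in>{R\<in>Pow A. card R = k}. g (card R)) = real (card A choose k) * g k"
      using n_subsets[OF assms, of k] by simp
  qed
  finally show ?thesis .
qed

lemma weights_sum:
  assumes "finite A" "card A + 1 = d"
  shows "(\<Sum>R\<in>Pow A. real (fact (card R) * fact (d - card R - 1)) / real (fact d)) = 1"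
proof -
  let ?n = "card A"
  have "(\<Sum>R\<in>Pow A. real (fact (card R) * fact (d - card R - 1)) / real (fact d))
     = (\<Sum>k\<in>{0..?n}. real (?n choose k) * (real (fact k * fact (d - k - 1)) / real (fact d)))"
    by (rule sum_Pow_card[OF assms(1)])
  also have "\<dots> = (\<Sum>k\<in>{0..?n}. real (fact ?n) / real (fact d))"
  proof (rule sum.cong[OF refl])
    fix k assume k: "k \<in> {0..?n}"
    have "d - k - 1 = ?n - k" using assms(2) by simp
    moreover have "fact k * fact (?n - k) * (?n choose k) = (fact ?n :: nat)"
      using k by (intro binomial_fact_lemma) simp
    ultimately show "real (?n choose k) * (real (fact k * fact (d - k - 1)) / real (fact d)) = real (fact ?n) / real (fact d)"
    proof -
      have e: "real (fact k * fact (?n - k) * (?n choose k)) = real (fact ?n)"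
        using \<open>fact k * fact (?n - k) * (?n choose k) = (fact ?n :: nat)\<close> by (simp only:)
      then show ?thesis using \<open>d - k - 1 = ?n - k\<close>
        by (simp only: of_nat_mult) (simp add: field_simps)
    qed
  qed
  also have "\<dots> = real d * real (fact ?n) / real (fact d)"
    using assms(2) by simp
  also have "\<dots> = 1"
  proof -
    have "real (fact d) = real (fact (Suc ?n))" using assms(2) by simp
    also have "\<dots> = real d * real (fact ?n)" using assms(2) by (simp only: fact_Suc of_nat_mult) simp
    finally show ?thesis using assms(2) by simp
  qed
  finally show ?thesis .
qed

lemma weights_half:
  assumes "finite A" "card A + 1 = d" "b \<in> A"
  shows "(\<Sum>R\<in>Pow A. real (fact (card R) * fact (d - card R - 1)) / real (fact d) * (if b \<in> R then 1 else 0)) = 1/2"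
proof -
  define w where "w R = real (fact (card R) * fact (d - card R - 1)) / real (fact d)" for R :: "'a set"
  have wc: "w (A - R) = w R" if "R \<in> Pow A" for R
  proof -
    have fR: "finite R" using that assms(1) finite_subset by auto
    have c: "card (A - R) = card A - card R" using that fR by (simp add: card_Diff_subset)
    have cl: "card R \<le> card A" using that assms(1) by (simp add: card_mono)
    have "d - (card A - card R) - 1 = card R" "d - card R - 1 = card A - card R" using cl assms(2) by auto
    then show ?thesis unfolding w_def c by (simp add: mult.commute)
  qed
  have bij: "bij_betw (\<lambda>R. A - R) (Pow A) (Pow A)"
    by (rule bij_betwI[where g="\<lambda>R. A - R"]) auto
  have "(\<Sum>R\<in>Pow A. w R * (if b \<in> R then 1 else 0)) = (\<Sum>R\<in>Pow A. w (A - R) * (if b \<in> A - R then 1 else 0))"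
    by (rule sum.reindex_bij_betw[OF bij, symmetric])
  also have "\<dots> = (\<Sum>R\<in>Pow A. w R * (if b \<in> R then 0 else 1))"
    using assms(3) by (intro sum.cong refl) (simp add: wc)
  finally have e: "(\<Sum>R\<in>Pow A. w R * (if b \<in> R then 1 else 0)) = (\<Sum>R\<in>Pow A. w R * (if b \<in> R then 0 else 1))" .
  have "(\<Sum>R\<in>Pow A. w R * (if b \<in> R then 1 else 0)) + (\<Sum>R\<in>Pow A. w R * (if b \<in> R then 0 else 1)) = (\<Sum>R\<in>Pow A. w R)"
    by (simp add: sum.distrib[symmetric] if_distrib cong: if_cong)
  also have "\<dots> = 1" unfolding w_def by (rule weights_sum[OF assms(1,2)])
  finally show ?thesis using e unfolding w_def by simp
qed



lemma shapley_alg: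
  fixes c :: "nat \<Rightarrow> nat \<Rightarrow> real" and l :: "nat \<Rightarrow> real" and A I :: "nat set"
  assumes fin: "finite A" and aA: "a \<notin> A" and cd: "card A + 1 = d"
  shows "(\<Sum>R\<in>Pow A. (real (fact (card R) * fact (d - card R - 1)) / real (fact d)) *
           ((\<Sum>i\<in>I. l i * (c i a + (\<Sum>b\<in>R. c i b))^2) - (\<Sum>i\<in>I. l i * (\<Sum>b\<in>R. c i b)^2)))
       = (\<Sum>i\<in>I. l i * c i a * (c i a + (\<Sum>b\<in>A. c i b)))"
proof -
  define w where "w R = real (fact (card R) * fact (d - card R - 1)) / real (fact d)" for R :: "nat set"
  have w1: "(\<Sum>R\<in>Pow A. w R) = 1" unfolding w_def by (rule weights_sum[OF fin cd])
  have wh: "(\<Sum>R\<in>Pow A. w R * (if b \<in> R then 1 else 0)) = 1/2" if "b \<in> A" for b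
    unfolding w_def by (rule weights_half[OF fin cd that])
  have s1: "(\<Sum>i\<in>I. l i * (c i a + (\<Sum>b\<in>R. c i b))^2) - (\<Sum>i\<in>I. l i * (\<Sum>b\<in>R. c i b)^2)
        = (\<Sum>i\<in>I. l i * ((c i a)^2 + 2 * c i a * (\<Sum>b\<in>R. c i b)))" for R
    by (simp add: sum_subtractf[symmetric] power2_sum algebra_simps)
  have s4: "(\<Sum>R\<in>Pow A. w R * (\<Sum>b\<in>R. c i b)) = (\<Sum>b\<in>A. c i b) / 2" for i
  proof -
    have "(\<Sum>R\<in>Pow A. w R * (\<Sum>b\<in>R. c i b)) = (\<Sum>R\<in>Pow A. \<Sum>b\<in>A. c i b * (w R * (if b \<in> R then 1 else 0)))"
    proof (rule sum.cong[OF refl])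
      fix R assume R: "R \<in> Pow A"
      have "(\<Sum>b\<in>A. (if b \<in> R then c i b else 0)) = sum (c i) (A \<inter> R)"
        by (rule sum.inter_restrict[OF fin, symmetric])
      also have "A \<inter> R = R" using R by auto
      finally have "(\<Sum>b\<in>R. c i b) = (\<Sum>b\<in>A. (if b \<in> R then c i b else 0))" by simp
      then show "w R * (\<Sum>b\<in>R. c i b) = (\<Sum>b\<in>A. c i b * (w R * (if b \<in> R then 1 else 0)))"
        by (simp add: sum_distrib_left if_distrib mult.commute cong: if_cong)
    qed
    also have "\<dots> = (\<Sum>b\<in>A. \<Sum>R\<in>Pow A. c i b * (w R * (if b \<in> R then 1 else 0)))"
      by (rule sum.swap)
    also have "\<dots> = (\<Sum>b\<in>A. c i b * (1/2))"
      by (intro sum.cong refl) (simp add: sum_distrib_left[symmetric] wh)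
    finally show ?thesis by (simp add: sum_divide_distrib[symmetric])
  qed
  have "(\<Sum>R\<in>Pow A. w R * ((\<Sum>i\<in>I. l i * (c i a + (\<Sum>b\<in>R. c i b))^2) - (\<Sum>i\<in>I. l i * (\<Sum>b\<in>R. c i b)^2)))
      = (\<Sum>R\<in>Pow A. \<Sum>i\<in>I. w R * (l i * ((c i a)^2 + 2 * c i a * (\<Sum>b\<in>R. c i b))))"
    by (simp add: s1 sum_distrib_left)
  also have "\<dots> = (\<Sum>i\<in>I. \<Sum>R\<in>Pow A. w R * (l i * ((c i a)^2 + 2 * c i a * (\<Sum>b\<in>R. c i b))))"
    by (rule sum.swap)
  also have "\<dots> = (\<Sum>i\<in>I. l i * ((c i a)^2 * (\<Sum>R\<in>Pow A. w R) + 2 * c i a * (\<Sum>R\<in>Pow A. w R * (\<Sum>b\<in>R. c i b))))"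
  proof (rule sum.cong[OF refl])
    fix i
    have "(\<Sum>R\<in>Pow A. w R * (l i * ((c i a)^2 + 2 * c i a * (\<Sum>b\<in>R. c i b))))
        = (\<Sum>R\<in>Pow A. l i * ((c i a)^2 * w R) + l i * (2 * c i a) * (w R * (\<Sum>b\<in>R. c i b)))"
      by (intro sum.cong refl) (simp add: algebra_simps)
    also have "\<dots> = l i * ((c i a)^2 * (\<Sum>R\<in>Pow A. w R)) + l i * (2 * c i a) * (\<Sum>R\<in>Pow A. w R * (\<Sum>b\<in>R. c i b))"
      by (simp add: sum.distrib sum_distrib_left[symmetric])
    finally show "(\<Sum>R\<in>Pow A. w R * (l i * ((c i a)^2 + 2 * c i a * (\<Sum>b\<in>R. c i b))))
        = l i * ((c i a)^2 * (\<Sum>R\<in>Pow A. w R) + 2 * c i a * (\<Sum>R\<in>Pow A. w R * (\<Sum>b\<in>R. c i b)))"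
      by (simp add: algebra_simps)
  qed
  also have "\<dots> = (\<Sum>i\<in>I. l i * c i a * (c i a + (\<Sum>b\<in>A. c i b)))"
    by (intro sum.cong refl) (simp add: w1 s4 power2_eq_square algebra_simps)
  finally show ?thesis unfolding w_def .
qed

theorem proposition1:
  fixes M :: "'w measure" and X :: "'w \<Rightarrow> real \<Rightarrow> real"
    and lo hi :: real and mu :: "real \<Rightarrow> real" and kappa :: "real \<Rightarrow> real \<Rightarrow> real"
    and lam :: "nat \<Rightarrow> real" and xi :: "nat \<Rightarrow> real \<Rightarrow> real" and m :: nat
    and Tp :: "nat \<Rightarrow> real set" and d a :: nat and \<omega> :: 'w
  assumes prob: "prob_space M"
    and interval: "lo < hi"
    and rv: "\<forall>t\<in>{lo..hi}. (\<lambda>w. X w t) \<in> borel_measurable M"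
    and second_moment: "\<forall>t\<in>{lo..hi}. integrable M (\<lambda>w. (X w t)^2)"
    and L2_cont: "\<forall>t\<in>{lo..hi}.
        ((\<lambda>s. integral\<^sup>L M (\<lambda>w. (X w s - X w t)^2)) \<longlongrightarrow> 0) (at t within {lo..hi})"
    and mean: "\<forall>t\<in>{lo..hi}. mu t = integral\<^sup>L M (\<lambda>w. X w t)"
    and cov: "\<forall>s\<in>{lo..hi}. \<forall>t\<in>{lo..hi}.
        kappa s t = integral\<^sup>L M (\<lambda>w. (X w s - mu s) * (X w t - mu t))"
    and m_pos: "m \<ge> 1"
    and xi_meas: "\<forall>i\<in>{1..m}. xi i \<in> borel_measurable lborel"
    and xi_L2: "\<forall>i\<in>{1..m}. set_integrable lborel {lo..hi} (\<lambda>t. (xi i t)^2)"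
    and orthonormal: "\<forall>i\<in>{1..m}. \<forall>j\<in>{1..m}.
        ip {lo..hi} (xi i) (xi j) = (if i = j then 1 else 0)"
    and eigen: "\<forall>i\<in>{1..m}. \<forall>s\<in>{lo..hi}.
        ip {lo..hi} (kappa s) (xi i) = lam i * xi i s"
    and lam_sorted: "\<forall>i\<in>{1..m}. \<forall>j\<in>{1..m}. i \<le> j \<longrightarrow> lam j \<le> lam i"
    and lam_m_pos: "lam m > 0"
    and largest: "\<And>\<nu> \<phi>. \<phi> \<in> borel_measurable lborel \<Longrightarrow>
        set_integrable lborel {lo..hi} (\<lambda>t. (\<phi> t)^2) \<Longrightarrow>
        ip {lo..hi} \<phi> \<phi> \<noteq> 0 \<Longrightarrow>
        (\<forall>s\<in>{lo..hi}. ip {lo..hi} (kappa s) \<phi> = \<nu> * \<phi> s) \<Longrightarrow>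
        (\<forall>i\<in>{1..m}. ip {lo..hi} \<phi> (xi i) = 0) \<Longrightarrow> \<nu> \<le> lam m"
    and d_pos: "d \<ge> 1"
    and pieces_meas: "\<forall>b\<in>{1..d}. Tp b \<in> sets lborel"
    and pieces_disj: "\<forall>b\<in>{1..d}. \<forall>c\<in>{1..d}. b \<noteq> c \<longrightarrow> Tp b \<inter> Tp c = {}"
    and pieces_cover: "(\<Union>b\<in>{1..d}. Tp b) = {lo..hi}"
    and a_in: "a \<in> {1..d}"
    and omega: "\<omega> \<in> space M"
    and path_meas: "X \<omega> \<in> borel_measurable lborel"
    and path_L2: "set_integrable lborel {lo..hi} (\<lambda>t. (X \<omega> t)^2)"
  shows "theta {lo..hi} Tp d a lam xi m (X \<omega>) mu =
    (\<Sum>i\<in>{1..m}. (1 / lam i) * ip (Tp a) (\<lambda>t. X \<omega> t - mu t) (xi i)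
                                * ip {lo..hi} (\<lambda>t. X \<omega> t - mu t) (xi i))"
  proof -
  let ?T = "{lo..hi}" and ?D = "{1..d}" and ?A = "{1..d} - {a}"
  define Ym where "Ym t = X \<omega> t - mu t" for t
  define c where "c i b = ip (Tp b) (\<lambda>t. X \<omega> t - mu t) (xi i)" for i b
  have mucont: "continuous_on ?T mu"
    by (rule mu_cont[OF prob rv second_moment L2_cont mean])
  have mu2: "set_integrable lborel ?T (\<lambda>t. (mu t)^2)"
    by (intro borel_integrable_atLeastAtMost' continuous_on_power mucont)
  have mum: "set_borel_measurable lborel ?T mu"
    using borel_integrable_atLeastAtMost'[OF mucont]
    unfolding set_integrable_def set_borel_measurable_def by (rule borel_measurable_integrable)
  have Xm: "set_borel_measurable lborel ?T (X \<omega>)"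
    unfolding set_borel_measurable_def using path_meas by measurable
  have gi: "set_integrable lborel ?T (\<lambda>t. (X \<omega> t - mu t) * xi i t)" if i: "i \<in> {1..m}" for i
  proof -
    have xm: "xi i \<in> borel_measurable lborel" using xi_meas i by blast
    have xim: "set_borel_measurable lborel ?T (xi i)"
      unfolding set_borel_measurable_def using xm by measurable
    have x1: "set_integrable lborel ?T (\<lambda>t. X \<omega> t * xi i t)"
      by (rule L2_prod[OF path_L2 xi_L2[rule_format, OF i] Xm xim])
    have x2: "set_integrable lborel ?T (\<lambda>t. mu t * xi i t)"
      by (rule L2_prod[OF mu2 xi_L2[rule_format, OF i] mum xim])
    have "set_integrable lborel ?T (\<lambda>t. X \<omega> t * xi i t - mu t * xi i t)"
      by (rule set_integral_diff(1)[OF x1 x2])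
    then show ?thesis by (simp add: algebra_simps)
  qed
  have key: "ip ?T (\<lambda>t. Xhat Tp R (X \<omega>) mu t - mu t) (xi i) = (\<Sum>b\<in>R. c i b)"
    if i: "i \<in> {1..m}" and R: "R \<subseteq> ?D" for i R
  proof -
    let ?U = "\<Union>b\<in>R. Tp b"
    have UT: "?U \<subseteq> ?T" using R pieces_cover by auto
    have "ip ?T (\<lambda>t. Xhat Tp R (X \<omega>) mu t - mu t) (xi i)
        = (LINT t:?U|lborel. (X \<omega> t - mu t) * xi i t)"
      unfolding ip_def set_lebesgue_integral_def
      by (intro Bochner_Integration.integral_cong refl) (use UT in \<open>auto simp: Xhat_def indicator_def\<close>)
    also have "\<dots> = (\<Sum>b\<in>R. LINT t:Tp b|lborel. (X \<omega> t - mu t) * xi i t)"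
    proof (rule set_integral_finite_UN_AE)
      show "finite R" using R finite_subset by blast
      show "AE x in lborel. x \<in> Tp b \<and> x \<in> Tp b' \<longrightarrow> b = b'" if "b \<in> R" "b' \<in> R" for b b'
        using that R pieces_disj by (intro AE_I2) blast
      show "Tp b \<in> sets lborel" if "b \<in> R" for b using that R pieces_meas by blast
      show "set_integrable lborel (Tp b) (\<lambda>t. (X \<omega> t - mu t) * xi i t)" if "b \<in> R" for b
        by (rule set_integrable_subset[OF gi[OF i]]) (use that R pieces_meas pieces_cover in auto)
    qed
    finally show ?thesis unfolding c_def ip_def .
  qed
  have total: "ip ?T (\<lambda>t. X \<omega> t - mu t) (xi i) = (\<Sum>b\<in>?D. c i b)" if i: "i \<in> {1..m}" for i
  proof -
    have "ip ?T (\<lambda>t. X \<omega> t - mu t) (xi i) = ip ?T (\<lambda>t. Xhat Tp ?D (X \<omega>) mu t - mu t) (xi i)"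
      unfolding ip_def set_lebesgue_integral_def
      by (intro Bochner_Integration.integral_cong refl) (use pieces_cover in \<open>auto simp: Xhat_def indicator_def\<close>)
    also have "\<dots> = (\<Sum>b\<in>?D. c i b)" by (rule key[OF i order_refl])
    finally show ?thesis .
  qed
  have fm: "fmd2 ?T lam xi m (Xhat Tp R (X \<omega>) mu) mu = (\<Sum>i\<in>{1..m}. (1 / lam i) * (\<Sum>b\<in>R. c i b)^2)"
    if R: "R \<subseteq> ?D" for R
    unfolding fmd2_def using key R by (intro sum.cong refl) simp
  have aA: "a \<notin> ?A" by simp
  have cA: "card ?A + 1 = d" using a_in d_pos by simp
  have "theta ?T Tp d a lam xi m (X \<omega>) mu
     = (\<Sum>R\<in>Pow ?A. (real (fact (card R) * fact (d - card R - 1)) / real (fact d)) *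
           ((\<Sum>i\<in>{1..m}. (1 / lam i) * (c i a + (\<Sum>b\<in>R. c i b))^2) - (\<Sum>i\<in>{1..m}. (1 / lam i) * (\<Sum>b\<in>R. c i b)^2)))"
    unfolding theta_def
  proof (intro sum.cong refl)
    fix R assume R: "R \<in> Pow ?A"
    have R1: "insert a R \<subseteq> ?D" "R \<subseteq> ?D" using R a_in by auto
    have fR: "finite R" using R finite_subset by (metis PowD finite_Diff finite_atLeastAtMost)
    have aR: "a \<notin> R" using R by auto
    have "(\<Sum>b\<in>insert a R. c i b) = c i a + (\<Sum>b\<in>R. c i b)" for i
      using fR aR by simp
    then show "real (fact (card R) * fact (d - card R - 1)) / real (fact d) *
          (fmd2 ?T lam xi m (Xhat Tp (insert a R) (X \<omega>) mu) mu - fmd2 ?T lam xi m (Xhat Tp R (X \<omega>) mu) mu)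
        = real (fact (card R) * fact (d - card R - 1)) / real (fact d) *
           ((\<Sum>i\<in>{1..m}. (1 / lam i) * (c i a + (\<Sum>b\<in>R. c i b))^2) - (\<Sum>i\<in>{1..m}. (1 / lam i) * (\<Sum>b\<in>R. c i b)^2))"
      using fm[OF R1(1)] fm[OF R1(2)] by simp
  qed
  also have "\<dots> = (\<Sum>i\<in>{1..m}. (1 / lam i) * c i a * (c i a + (\<Sum>b\<in>?A. c i b)))"
    by (rule shapley_alg[OF _ aA cA]) simp
  also have "\<dots> = (\<Sum>i\<in>{1..m}. (1 / lam i) * ip (Tp a) (\<lambda>t. X \<omega> t - mu t) (xi i)
                                * ip {lo..hi} (\<lambda>t. X \<omega> t - mu t) (xi i))"
  proof (intro sum.cong refl)
    fix i assume i: "i \<in> {1..m}"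
    have "(\<Sum>b\<in>?D. c i b) = c i a + (\<Sum>b\<in>?A. c i b)"
      using a_in by (simp add: sum.remove)
    then show "(1 / lam i) * c i a * (c i a + (\<Sum>b\<in>?A. c i b)) = (1 / lam i) * ip (Tp a) (\<lambda>t. X \<omega> t - mu t) (xi i)
                                * ip {lo..hi} (\<lambda>t. X \<omega> t - mu t) (xi i)"
      using total[OF i] unfolding c_def by simp
  qed
  finally show ?thesis .
qed

end
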